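(* Let $n\ge1$ and let $\mathfrak{n}=\mathfrak{n}(n)$ be as in the context. Let $D$ be a diagonalizable derivation of $\mathfrak{n}$ with eigenvalues $1$, $2$ and $3$. Then the eigenspaces of $D$ for the eigenvalues $1,2,3$ have dimensions $d_1=n+3$, $d_2=\frac{n(n+1)}{2}+3$ and $d_3=2n+2$ respectively. In particular, if $\mathfrak{n}=\tilde{\mathfrak{n}}_1\oplus\tilde{\mathfrak{n}}_2\oplus\tilde{\mathfrak{n}}_3$ is any grading of $\mathfrak{n}$, then $\dim\tilde{\mathfrak{n}}_i=d_i$ for $i=1,2,3$.
   Context: Fix a field of characteristic zero and a positive integer $n$. The Lie algebra $\mathfrak{n}(n)$ has basis $e_1,\dots,e_n,a,b,x$; $u,y$; $e_i\wedge e_j$ ($1\le i<j\le n$); $c$; $x_1,\dots,x_n$; $u_1,\dots,u_n$; $y_1,\dots,y_n$; $f,h$. Its bracket is defined on basis elements by: $[e_i,e_j]=e_i\wedge e_j$ for $i<j$ (so $[e_j,e_i]=-e_i\wedge e_j$), $[e_i,x]=x_i$, $[e_i,u]=u_i$, $[e_i,y]=y_i$, $[a,b]=c$, $[a,y]=f$, $[a,c]=h$, $[b,u]=h$, $[b,y]=h$, $[x,u]=f$, $[x,y]=h$, extended by antisymmetry, and all other brackets of pairs of basis elements are zero. A grading $\mathfrak{n}=\tilde{\mathfrak{n}}_1\oplus\tilde{\mathfrak{n}}_2\oplus\tilde{\mathfrak{n}}_3$ is a vector space decomposition with $[\tilde{\mathfrak{n}}_i,\tilde{\mathfrak{n}}_j]\subset\tilde{\mathfrak{n}}_{i+j}$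 for all $i,j$, where $\tilde{\mathfrak{n}}_m=0$ for $m>3$. *)

theory Defs
  imports Complex_Main "HOL-Library.Function_Algebras"
begin

text \<open>Basis labels of the Lie algebra n(n):
  E i = e_i, A = a, Bb = b, X = x, U = u, Y = y, EW i j = e_i wedge e_j,
  C = c, Xs i = x_i, Us i = u_i, Ys i = y_i, F = f, H = h.\<close>
datatype nb = E nat | A | Bb | X | U | Y | EW nat nat | C | Xs nat | Us nat | Ys nat | F | H

definition nbasis :: "nat \<Rightarrow> nb set" where
  "nbasis n = E ` {1..n} \<union> {A, Bb, X, U, Y, C, F, H}
     \<union> {EW i j | i j. 1 \<le> i \<and> i < j \<and> j \<le> n}
     \<union> Xs ` {1..n} \<union> Us ` {1..n} \<union> Ys ` {1..n}"

definition nspace :: "nat \<Rightarrow> (nb \<Rightarrow> 'k::field) set" where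
  "nspace n = {v. \<forall>k. k \<notin> nbasis n \<longrightarrow> v k = 0}"

definition sc :: "'k::field \<Rightarrow> (nb \<Rightarrow> 'k) \<Rightarrow> (nb \<Rightarrow> 'k)" where
  "sc c v = (\<lambda>k. c * v k)"

definition delta :: "nb \<Rightarrow> (nb \<Rightarrow> 'k::field)" where
  "delta r = (\<lambda>k. if k = r then 1 else 0)"

fun posbr :: "nb \<Rightarrow> nb \<Rightarrow> nb option" where
  "posbr (E i) (E j) = (if i < j then Some (EW i j) else None)"
| "posbr (E i) X = Some (Xs i)"
| "posbr (E i) U = Some (Us i)"
| "posbr (E i) Y = Some (Ys i)"
| "posbr A Bb = Some C"
| "posbr A Y = Some F"
| "posbr A C = Some H"
| "posbr Bb U = Some H"
| "posbr Bb Y = Some H"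
| "posbr X U = Some F"
| "posbr X Y = Some H"
| "posbr _ _ = None"

definition bb :: "nb \<Rightarrow> nb \<Rightarrow> (nb \<Rightarrow> 'k::field)" where
  "bb p q = (case posbr p q of Some r \<Rightarrow> delta r
             | None \<Rightarrow> (case posbr q p of Some r \<Rightarrow> - delta r | None \<Rightarrow> 0))"

definition lie :: "nat \<Rightarrow> (nb \<Rightarrow> 'k::field) \<Rightarrow> (nb \<Rightarrow> 'k) \<Rightarrow> (nb \<Rightarrow> 'k)" where
  "lie n v w = (\<lambda>k. \<Sum>p\<in>nbasis n. \<Sum>q\<in>nbasis n. v p * w q * bb p q k)"

abbreviation ndim :: "(nb \<Rightarrow> 'k::field) set \<Rightarrow> nat" where
  "ndim S \<equiv> vector_space.dim (sc :: 'k \<Rightarrow> _) S"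

definition is_derivation :: "nat \<Rightarrow> ((nb \<Rightarrow> 'k::field) \<Rightarrow> (nb \<Rightarrow> 'k)) \<Rightarrow> bool" where
  "is_derivation n D \<longleftrightarrow>
     (\<forall>v\<in>nspace n. D v \<in> nspace n)
   \<and> (\<forall>v\<in>nspace n. \<forall>w\<in>nspace n. D (v + w) = D v + D w)
   \<and> (\<forall>c. \<forall>v\<in>nspace n. D (sc c v) = sc c (D v))
   \<and> (\<forall>v\<in>nspace n. \<forall>w\<in>nspace n. D (lie n v w) = lie n (D v) w + lie n v (D w))"

definition eigsp :: "nat \<Rightarrow> ((nb \<Rightarrow> 'k::field) \<Rightarrow> (nb \<Rightarrow> 'k)) \<Rightarrow> 'k \<Rightarrow> (nb \<Rightarrow> 'k) set" where
  "eigsp n D l = {v \<in> nspace n. D v = sc l v}"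

definition eigvals :: "nat \<Rightarrow> ((nb \<Rightarrow> 'k::field) \<Rightarrow> (nb \<Rightarrow> 'k)) \<Rightarrow> 'k set" where
  "eigvals n D = {l. \<exists>v\<in>nspace n. v \<noteq> 0 \<and> D v = sc l v}"

definition diagonalizable :: "nat \<Rightarrow> ((nb \<Rightarrow> 'k::field) \<Rightarrow> (nb \<Rightarrow> 'k)) \<Rightarrow> bool" where
  "diagonalizable n D \<longleftrightarrow>
     (\<exists>B \<subseteq> nspace n. \<not> module.dependent (sc :: 'k \<Rightarrow> _) B
        \<and> module.span (sc :: 'k \<Rightarrow> _) B = nspace n
        \<and> (\<forall>b\<in>B. \<exists>l. D b = sc l b))"

definition is_grading :: "nat \<Rightarrow> (nat \<Rightarrow> (nb \<Rightarrow> 'k::field) set) \<Rightarrow> bool" where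
  "is_grading n G \<longleftrightarrow>
     (\<forall>i\<in>{1,2,3}. module.subspace (sc :: 'k \<Rightarrow> _) (G i) \<and> G i \<subseteq> nspace n)
   \<and> (\<forall>v\<in>nspace n. \<exists>!t. fst t \<in> G 1 \<and> fst (snd t) \<in> G 2 \<and> snd (snd t) \<in> G 3
                          \<and> v = fst t + fst (snd t) + snd (snd t))
   \<and> (\<forall>i\<in>{1,2,3}. \<forall>j\<in>{1,2,3}. \<forall>x\<in>G i. \<forall>y\<in>G j.
        lie n x y \<in> (if i + j \<le> 3 then G (i + j) else {0}))"

end

theory Submission
  imports Defs
begin

lemma sum_fun_apply: "(\<Sum>x\<in>S. f x) k = (\<Sum>x\<in>S. f x k)"
  by (induction S rule: infinite_finite_induct) (auto simp: zero_fun_def plus_fun_def)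

lemma vs_sc: "vector_space (sc :: 'k::field \<Rightarrow> (nb \<Rightarrow> 'k) \<Rightarrow> _)"
  by unfold_locales (auto simp: sc_def plus_fun_def algebra_simps fun_eq_iff)

interpretation VS: vector_space "sc :: 'k::field \<Rightarrow> (nb \<Rightarrow> 'k) \<Rightarrow> _"
  by (rule vs_sc)

lemma sc_apply[simp]: "sc c v k = c * v k" by (simp add: sc_def)
lemma delta_apply: "delta r k = (if k = r then 1 else 0)" by (simp add: delta_def)

lemma test: "VS.dim (nspace n :: (nb \<Rightarrow> 'k::field) set) = vector_space.dim (sc::'k \<Rightarrow> _) (nspace n)"
  by simp


lemma finite_nbasis: "finite (nbasis n)"
proof -
  have "{EW i j | i j. 1 \<le> i \<and> i < j \<and> j \<le> n} \<subseteq> (\<lambda>(i,j). EW i j) ` ({1..n}\<times>{1..n})"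
    by force
  then have "finite {EW i j | i j. 1 \<le> i \<and> i < j \<and> j \<le> n}"
    by (rule finite_subset) auto
  then show ?thesis unfolding nbasis_def by auto
qed

lemma posbr_asym: "posbr p q \<noteq> None \<Longrightarrow> posbr q p = None"
  by (cases p; cases q; auto)

lemma bb_alt: "(bb p q k :: 'k::field) = (if posbr p q = Some k then 1 else 0) - (if posbr q p = Some k then 1 else 0)"
proof (cases "posbr p q")
  case None
  then show ?thesis by (cases "posbr q p") (auto simp: bb_def delta_def)
next
  case (Some r)
  then have "posbr q p = None" using posbr_asym by auto
  then show ?thesis using Some by (auto simp: bb_def delta_def)
qed

lemma bb_swap: "(bb q p k :: 'k::field) = - bb p q k"
  by (simp add: bb_alt)

lemma posbr_nbasis: "posbr p q = Some r \<Longrightarrow> p \<in> nbasis n \<Longrightarrow> q \<in> nbasis n \<Longrightarrow> r \<in> nbasis n"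
  by (cases p; cases q; auto simp: nbasis_def split: if_splits)

definition Pk :: "nat \<Rightarrow> nb \<Rightarrow> (nb \<times> nb) set" where
  "Pk n k = {x \<in> nbasis n \<times> nbasis n. posbr (fst x) (snd x) = Some k}"

lemma lie_coord: "lie n v w k = (\<Sum>x\<in>Pk n k. (v (fst x) * w (snd x) - v (snd x) * w (fst x) :: 'k::field))"
proof -
  let ?S = "nbasis n"
  have fin: "finite (?S \<times> ?S)" using finite_nbasis by auto
  have "lie n v w k = (\<Sum>p\<in>?S. \<Sum>q\<in>?S. v p * w q * (if posbr p q = Some k then 1 else 0))
      - (\<Sum>p\<in>?S. \<Sum>q\<in>?S. v p * w q * (if posbr q p = Some k then 1 else 0))"
    by (simp add: lie_def bb_alt right_diff_distrib sum_subtractf)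
  also have "(\<Sum>p\<in>?S. \<Sum>q\<in>?S. v p * w q * (if posbr p q = Some k then 1 else 0))
       = (\<Sum>x\<in>?S\<times>?S. if posbr (fst x) (snd x) = Some k then v (fst x) * w (snd x) else 0)"
    by (simp add: sum.cartesian_product case_prod_beta if_distrib cong: if_cong)
  also have "\<dots> = (\<Sum>x\<in>Pk n k. v (fst x) * w (snd x))"
    unfolding Pk_def by (simp add: sum.inter_filter[OF fin])
  also have "(\<Sum>p\<in>?S. \<Sum>q\<in>?S. v p * w q * (if posbr q p = Some k then 1 else 0))
       = (\<Sum>q\<in>?S. \<Sum>p\<in>?S. v p * w q * (if posbr q p = Some k then 1 else 0))"
    by (rule sum.swap)
  also have "\<dots> = (\<Sum>x\<in>?S\<times>?S. if posbr (fst x) (snd x) = Some k then v (snd x) * w (fst x) else 0)"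
    by (simp add: sum.cartesian_product case_prod_beta if_distrib cong: if_cong)
  also have "\<dots> = (\<Sum>x\<in>Pk n k. v (snd x) * w (fst x))"
    unfolding Pk_def by (simp add: sum.inter_filter[OF fin])
  finally show ?thesis by (simp add: sum_subtractf mult.commute)
qed


lemma nb_in[simp]: "A \<in> nbasis n" "Bb \<in> nbasis n" "X \<in> nbasis n" "U \<in> nbasis n" "Y \<in> nbasis n"
  "C \<in> nbasis n" "F \<in> nbasis n" "H \<in> nbasis n"
  by (auto simp: nbasis_def)

lemma nb_in_iff[simp]: "E i \<in> nbasis n \<longleftrightarrow> 1 \<le> i \<and> i \<le> n"
  "Xs i \<in> nbasis n \<longleftrightarrow> 1 \<le> i \<and> i \<le> n"
  "Us i \<in> nbasis n \<longleftrightarrow> 1 \<le> i \<and> i \<le> n"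
  "Ys i \<in> nbasis n \<longleftrightarrow> 1 \<le> i \<and> i \<le> n"
  "EW i j \<in> nbasis n \<longleftrightarrow> 1 \<le> i \<and> i < j \<and> j \<le> n"
  by (auto simp: nbasis_def)

lemma Pk_H: "Pk n H = {(A,C),(Bb,U),(Bb,Y),(X,Y)}"
  unfolding Pk_def by (auto; rename_tac p q; case_tac p; case_tac q; auto split: if_splits)
lemma Pk_F: "Pk n F = {(A,Y),(X,U)}"
  unfolding Pk_def by (auto; rename_tac p q; case_tac p; case_tac q; auto split: if_splits)
lemma Pk_C: "Pk n C = {(A,Bb)}"
  unfolding Pk_def by (auto; rename_tac p q; case_tac p; case_tac q; auto split: if_splits)
lemma Pk_Us: "1 \<le> i \<Longrightarrow> i \<le> n \<Longrightarrow> Pk n (Us i) = {(E i,U)}"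
  unfolding Pk_def by (auto; rename_tac p q; case_tac p; case_tac q; auto split: if_splits)
lemma Pk_Ys: "1 \<le> i \<Longrightarrow> i \<le> n \<Longrightarrow> Pk n (Ys i) = {(E i,Y)}"
  unfolding Pk_def by (auto; rename_tac p q; case_tac p; case_tac q; auto split: if_splits)
lemma Pk_Xs: "1 \<le> i \<Longrightarrow> i \<le> n \<Longrightarrow> Pk n (Xs i) = {(E i,X)}"
  unfolding Pk_def by (auto; rename_tac p q; case_tac p; case_tac q; auto split: if_splits)
lemma Pk_EW: "1 \<le> i \<Longrightarrow> i < j \<Longrightarrow> j \<le> n \<Longrightarrow> Pk n (EW i j) = {(E i,E j)}"
  unfolding Pk_def by (auto; rename_tac p q; case_tac p; case_tac q; auto split: if_splits)
lemma posbr_not_low: "posbr p q \<noteq> Some k" if "k \<in> {A, Bb, X, U, Y} \<or> (\<exists>i. k = E i)"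
  using that by (cases p; cases q; auto)
lemma Pk_zero: "k \<in> {A, Bb, X, U, Y} \<or> (\<exists>i. k = E i) \<or> k \<notin> nbasis n \<Longrightarrow> Pk n k = {}"
  unfolding Pk_def using posbr_nbasis[of _ _ k n] posbr_not_low[of k] by auto

lemma lie_H: "lie n v w H = (v A * w C - v C * w A) + (v Bb * w U - v U * w Bb)
   + (v Bb * w Y - v Y * w Bb) + (v X * w Y - v Y * w X :: 'k::field)"
  by (simp add: lie_coord Pk_H)
lemma lie_F: "lie n v w F = (v A * w Y - v Y * w A) + (v X * w U - v U * w X :: 'k::field)"
  by (simp add: lie_coord Pk_F)
lemma lie_C: "lie n v w C = (v A * w Bb - v Bb * w A :: 'k::field)"
  by (simp add: lie_coord Pk_C)
lemma lie_Us: "1 \<le> i \<Longrightarrow> i \<le> n \<Longrightarrow> lie n v w (Us i) = (v (E i) * w U - v U * w (E i) :: 'k::field)"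
  by (simp add: lie_coord Pk_Us)
lemma lie_Ys: "1 \<le> i \<Longrightarrow> i \<le> n \<Longrightarrow> lie n v w (Ys i) = (v (E i) * w Y - v Y * w (E i) :: 'k::field)"
  by (simp add: lie_coord Pk_Ys)
lemma lie_Xs: "1 \<le> i \<Longrightarrow> i \<le> n \<Longrightarrow> lie n v w (Xs i) = (v (E i) * w X - v X * w (E i) :: 'k::field)"
  by (simp add: lie_coord Pk_Xs)
lemma lie_EW: "1 \<le> i \<Longrightarrow> i < j \<Longrightarrow> j \<le> n \<Longrightarrow> lie n v w (EW i j) = (v (E i) * w (E j) - v (E j) * w (E i) :: 'k::field)"
  by (simp add: lie_coord Pk_EW)
lemma lie_zero: "k \<in> {A, Bb, X, U, Y} \<or> (\<exists>i. k = E i) \<or> k \<notin> nbasis n \<Longrightarrow> lie n v w k = (0::'k::field)"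
  by (simp add: lie_coord Pk_zero)


lemma nspace_0[simp]: "0 \<in> nspace n" by (simp add: nspace_def)
lemma nspace_add[intro]: "v \<in> nspace n \<Longrightarrow> w \<in> nspace n \<Longrightarrow> v + w \<in> nspace n"
  by (simp add: nspace_def)
lemma nspace_diff[intro]: "v \<in> nspace n \<Longrightarrow> w \<in> nspace n \<Longrightarrow> v - w \<in> nspace n"
  by (simp add: nspace_def)
lemma nspace_uminus[intro]: "v \<in> nspace n \<Longrightarrow> - v \<in> nspace n"
  by (simp add: nspace_def)
lemma nspace_sc[intro]: "v \<in> nspace n \<Longrightarrow> sc c v \<in> nspace n"
  by (simp add: nspace_def)
lemma nspace_delta[intro]: "k \<in> nbasis n \<Longrightarrow> (delta k :: nb \<Rightarrow> 'k::field) \<in> nspace n"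
  by (simp add: nspace_def delta_def)
lemma nspace_lie[intro]: "(lie n v w :: nb \<Rightarrow> 'k::field) \<in> nspace n"
  by (simp add: nspace_def lie_zero)

lemma subspace_nspace: "VS.subspace (nspace n :: (nb \<Rightarrow> 'k::field) set)"
  by (auto simp: VS.subspace_def)

lemma lie_add_left: "lie n (v + v') w = lie n v w + (lie n v' w :: nb \<Rightarrow> 'k::field)"
  by (simp add: lie_def fun_eq_iff algebra_simps sum.distrib)
lemma lie_add_right: "lie n v (w + w') = lie n v w + (lie n v w' :: nb \<Rightarrow> 'k::field)"
  by (simp add: lie_def fun_eq_iff algebra_simps sum.distrib)
lemma lie_diff_left: "lie n (v - v') w = lie n v w - (lie n v' w :: nb \<Rightarrow> 'k::field)"
  by (simp add: lie_def fun_eq_iff algebra_simps sum_subtractf)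
lemma lie_diff_right: "lie n v (w - w') = lie n v w - (lie n v w' :: nb \<Rightarrow> 'k::field)"
  by (simp add: lie_def fun_eq_iff algebra_simps sum_subtractf)
lemma lie_sc_left: "lie n (sc c v) w = sc c (lie n v w :: nb \<Rightarrow> 'k::field)"
  by (simp add: lie_def fun_eq_iff algebra_simps sum_distrib_left)
lemma lie_sc_right: "lie n v (sc c w) = sc c (lie n v w :: nb \<Rightarrow> 'k::field)"
  by (simp add: lie_def fun_eq_iff algebra_simps sum_distrib_left)
lemma lie_0_left[simp]: "lie n 0 w = (0 :: nb \<Rightarrow> 'k::field)"
  by (simp add: lie_def fun_eq_iff)
lemma lie_0_right[simp]: "lie n v 0 = (0 :: nb \<Rightarrow> 'k::field)"
  by (simp add: lie_def fun_eq_iff)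
lemma lie_antisym: "lie n w v = - (lie n v w :: nb \<Rightarrow> 'k::field)"
proof -
  have "lie n w v k = - lie n v w k" for k
  proof -
    have "lie n w v k = (\<Sum>x\<in>Pk n k. - (v (fst x) * w (snd x) - v (snd x) * w (fst x)))"
      unfolding lie_coord by (rule sum.cong) (auto simp: mult.commute)
    also have "\<dots> = - (\<Sum>x\<in>Pk n k. (v (fst x) * w (snd x) - v (snd x) * w (fst x)))"
      by (rule sum_negf)
    finally show ?thesis by (simp only: lie_coord)
  qed
  then show ?thesis by (simp add: fun_eq_iff)
qed

lemma mult_if01: "(x::'k::field) * (if P then 1 else 0) = (if P then x else 0)" by simp

lemma lie_delta: assumes "p \<in> nbasis n" "q \<in> nbasis n"
  shows "lie n (delta p) (delta q) = (bb p q :: nb \<Rightarrow> 'k::field)"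
proof (rule ext)
  fix x
  have "lie n (delta p) (delta q) x = ((\<Sum>pa\<in>nbasis n. if pa = p then (\<Sum>qa\<in>nbasis n. if qa = q then bb pa qa x else 0) else (0::'k)) :: 'k)"
    by (simp add: lie_def delta_def; intro sum.cong refl; auto intro!: sum.cong)
  also have "\<dots> = bb p q x" using assms finite_nbasis by (simp add: sum.delta')
  finally show "lie n (delta p) (delta q) x = (bb p q x :: 'k)" by simp
qed

lemma expand: assumes "v \<in> nspace n"
  shows "v = (\<Sum>k\<in>nbasis n. sc (v k) (delta k :: nb \<Rightarrow> 'k::field))"
proof (rule ext)
  fix j
  have "(\<Sum>k\<in>nbasis n. sc (v k) (delta k :: nb \<Rightarrow> 'k)) j = (\<Sum>k\<in>nbasis n. if j = k then v k else 0)"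
    unfolding sum_fun_apply by (rule sum.cong) (auto simp: delta_def)
  also have "\<dots> = (if j \<in> nbasis n then v j else 0)"
    by (rule sum.delta'[OF finite_nbasis])
  also have "\<dots> = v j" using assms by (auto simp: nspace_def)
  finally show "v j = (\<Sum>k\<in>nbasis n. sc (v k) (delta k :: nb \<Rightarrow> 'k)) j" by simp
qed

lemma in_subspace_deltas:
  assumes S: "VS.subspace S" and v: "v \<in> nspace n"
    and d: "\<And>k. k \<in> nbasis n \<Longrightarrow> v k \<noteq> 0 \<Longrightarrow> (delta k :: nb \<Rightarrow> 'k::field) \<in> S"
  shows "v \<in> S"
proof -
  have "(\<Sum>k\<in>nbasis n. sc (v k) (delta k)) \<in> S"
  proof (rule VS.subspace_sum[OF S])
    fix k assume "k \<in> nbasis n"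
    then show "sc (v k) (delta k) \<in> S"
      using d[of k] VS.subspace_0[OF S] VS.subspace_scale[OF S]
      by (cases "v k = 0") (auto simp: sc_def zero_fun_def)
  qed
  then show ?thesis using expand[OF v] by simp
qed

lemma inj_delta: "inj (delta :: nb \<Rightarrow> nb \<Rightarrow> 'k::field)"
  by (auto simp: inj_def delta_def fun_eq_iff split: if_splits)

lemma indep_delta: assumes "finite K"
  shows "\<not> VS.dependent (delta ` K :: (nb \<Rightarrow> 'k::field) set)"
proof (rule VS.independent_if_scalars_zero)
  show "finite (delta ` K)" using assms by simp
  fix f :: "(nb \<Rightarrow> 'k) \<Rightarrow> 'k" and x :: "nb \<Rightarrow> 'k"
  assume s: "(\<Sum>x\<in>delta ` K. sc (f x) x) = 0" and x: "x \<in> delta ` K"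
  then obtain k where k: "k \<in> K" "x = delta k" by auto
  have "0 = (\<Sum>x\<in>delta ` K. sc (f x) x) k" using s by simp
  also have "\<dots> = (\<Sum>j\<in>K. f (delta j) * delta j k)"
    using inj_delta by (subst sum.reindex) (auto simp: sum_fun_apply inj_on_def inj_def)
  also have "\<dots> = f (delta k)"
    using k assms by (simp add: delta_def mult_if01)
  finally show "f x = 0" using k by simp
qed

definition FK :: "nat \<Rightarrow> nb set \<Rightarrow> (nb \<Rightarrow> 'k::field) set" where
  "FK n K = {v \<in> nspace n. \<forall>k \<in> nbasis n - K. v k = 0}"

lemma subspace_FK: "VS.subspace (FK n K)"
  by (auto simp: VS.subspace_def FK_def)

lemma dim_FK: assumes "K \<subseteq> nbasis n"
  shows "VS.dim (FK n K :: (nb \<Rightarrow> 'k::field) set) = card K"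
proof (rule VS.dim_unique)
  have fK: "finite K" using assms finite_nbasis finite_subset by blast
  show "delta ` K \<subseteq> (FK n K :: (nb \<Rightarrow> 'k) set)"
    using assms by (auto simp: FK_def delta_def nspace_def)
  show "FK n K \<subseteq> VS.span (delta ` K :: (nb \<Rightarrow> 'k) set)"
  proof
    fix v :: "nb \<Rightarrow> 'k" assume v: "v \<in> FK n K"
    show "v \<in> VS.span (delta ` K)"
      by (rule in_subspace_deltas[where n=n]) (use v in \<open>auto simp: FK_def intro: VS.span_base\<close>)
  qed
  show "\<not> VS.dependent (delta ` K :: (nb \<Rightarrow> 'k) set)" by (rule indep_delta[OF fK])
  show "card (delta ` K :: (nb \<Rightarrow> 'k) set) = card K"
    by (rule card_image) (meson inj_delta inj_on_subset subset_UNIV)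
qed

lemma nspace_FK: "nspace n = FK n (nbasis n)"
  by (auto simp: FK_def)


lemma nspace_span: "nspace n \<subseteq> VS.span (delta ` nbasis n :: (nb \<Rightarrow> 'k::field) set)"
proof
  fix v :: "nb \<Rightarrow> 'k" assume v: "v \<in> nspace n"
  show "v \<in> VS.span (delta ` nbasis n)"
    by (rule in_subspace_deltas[where n=n, OF VS.subspace_span v]) (simp add: VS.span_base)
qed

lemma finite_indep_nspace:
  assumes "B \<subseteq> (nspace n :: (nb \<Rightarrow> 'k::field) set)" "\<not> VS.dependent B"
  shows "finite B"
proof -
  have "B \<subseteq> VS.span (delta ` nbasis n)" using assms(1) nspace_span[of n] by blast
  then show ?thesis using VS.independent_span_bound[OF finite_imageI[OF finite_nbasis] assms(2)] by blast
qed

lemma dim_direct: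
  fixes U W :: "(nb \<Rightarrow> 'k::field) set"
  assumes U: "VS.subspace U" and W: "VS.subspace W" and Un: "U \<subseteq> nspace n" and Wn: "W \<subseteq> nspace n"
    and I: "U \<inter> W \<subseteq> {0}"
  shows "VS.dim {x + y | x y. x \<in> U \<and> y \<in> W} = VS.dim U + VS.dim W"
proof -
  obtain BU where BU: "BU \<subseteq> U" "\<not> VS.dependent BU" "U \<subseteq> VS.span BU" "card BU = VS.dim U"
    by (rule VS.basis_exists)
  obtain BW where BW: "BW \<subseteq> W" "\<not> VS.dependent BW" "W \<subseteq> VS.span BW" "card BW = VS.dim W"
    by (rule VS.basis_exists)
  have fU: "finite BU" by (rule finite_indep_nspace[of BU n]) (use BU(1,2) Un in blast)+
  have fW: "finite BW" by (rule finite_indep_nspace[of BW n]) (use BW(1,2) Wn in blast)+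
  have sU: "VS.span BU = U" using VS.span_subspace[OF BU(1) BU(3) U] .
  have sW: "VS.span BW = W" using VS.span_subspace[OF BW(1) BW(3) W] .
  have disj: "BU \<inter> BW = {}"
  proof (rule ccontr)
    assume "BU \<inter> BW \<noteq> {}"
    then obtain x where "x \<in> BU" "x \<in> BW" by blast
    then have "x = 0" using BU(1) BW(1) I by blast
    then show False using \<open>x \<in> BU\<close> BU(2) VS.dependent_zero by blast
  qed
  have key: False if a: "a \<in> P" "a \<in> VS.span ((P \<union> Q) - {a})"
      and P: "\<not> VS.dependent P" "VS.span P = S1" and Q: "VS.span Q = S2"
      and PQ: "P \<inter> Q = {}" and S1: "VS.subspace S1" and S2: "VS.subspace S2" and I2: "S1 \<inter> S2 \<subseteq> {0}"
    for a P Q S1 S2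
  proof -
    have "(P \<union> Q) - {a} = (P - {a}) \<union> Q" using a(1) PQ by blast
    then have "a \<in> VS.span ((P - {a}) \<union> Q)" using a by simp
    then obtain x y where xy: "a = x + y" "x \<in> VS.span (P - {a})" "y \<in> VS.span Q"
      unfolding VS.span_Un by blast
    have xS1: "x \<in> S1" using xy(2) VS.span_mono[of "P - {a}" P] P(2) by blast
    have aS1: "a \<in> S1" using a(1) P(2) VS.span_base by blast
    have "y = a - x" using xy(1) by (simp add: algebra_simps)
    then have "y \<in> S1" using VS.subspace_diff[OF S1 aS1 xS1] by simp
    moreover have "y \<in> S2" using xy(3) Q by simp
    ultimately have "y = 0" using I2 by blast
    then have "a \<in> VS.span (P - {a})" using xy by simp
    then have "VS.dependent P" unfolding VS.dependent_def using a(1) by blast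
    then show False using P(1) by simp
  qed
  have indep: "\<not> VS.dependent (BU \<union> BW)"
  proof
    assume "VS.dependent (BU \<union> BW)"
    then obtain a where a: "a \<in> BU \<union> BW" "a \<in> VS.span ((BU \<union> BW) - {a})"
      unfolding VS.dependent_def by blast
    show False
    proof (cases "a \<in> BU")
      case True
      show False by (rule key[OF True a(2) BU(2) sU sW disj U W I])
    next
      case False
      then have "a \<in> BW" using a by blast
      moreover have "a \<in> VS.span ((BW \<union> BU) - {a})" using a(2) by (simp add: Un_commute)
      moreover have "BW \<inter> BU = {}" "W \<inter> U \<subseteq> {0}" using disj I by blast+
      ultimately show False
        using key[of a BW BU W U] BW(2) sW sU W U by blast
    qed
  qed
  have ss: "VS.subspace {x + y | x y. x \<in> U \<and> y \<in> W}" by (rule VS.subspace_sums[OF U W])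
  have e1: "VS.span {x + y | x y. x \<in> U \<and> y \<in> W} = {x + y | x y. x \<in> U \<and> y \<in> W}"
    by (rule VS.span_subspace[OF subset_refl VS.span_superset ss])
  have e2: "VS.span (BU \<union> BW) = {x + y | x y. x \<in> U \<and> y \<in> W}"
    using VS.span_Un[of BU BW] unfolding sU sW .
  have sp: "VS.span (BU \<union> BW) = VS.span {x + y | x y. x \<in> U \<and> y \<in> W}"
    unfolding e1 e2 ..
  have "VS.dim {x + y | x y. x \<in> U \<and> y \<in> W} = card (BU \<union> BW)"
    by (rule VS.dim_eq_card[OF sp indep])
  also have "\<dots> = card BU + card BW" using card_Un_disjoint[OF fU fW disj] .
  finally show ?thesis unfolding BU(4) BW(4) .
qed


locale grad =
  fixes n :: nat and G :: "nat \<Rightarrow> (nb \<Rightarrow> 'k::field) set"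
  assumes gr: "is_grading n G"
begin

lemma grP1: "\<forall>i\<in>{1,2,3}. VS.subspace (G i) \<and> G i \<subseteq> nspace n"
  using gr[unfolded is_grading_def] by (rule conjunct1)
lemma grP2: "\<forall>v\<in>nspace n. \<exists>!t. fst t \<in> G 1 \<and> fst (snd t) \<in> G 2 \<and> snd (snd t) \<in> G 3
                          \<and> v = fst t + fst (snd t) + snd (snd t)"
  using gr[unfolded is_grading_def] by (rule conjunct2[THEN conjunct1])
lemma grP3: "\<forall>i\<in>{1,2,3}. \<forall>j\<in>{1,2,3}. \<forall>x\<in>G i. \<forall>y\<in>G j.
        lie n x y \<in> (if i + j \<le> 3 then G (i + j) else {0})"
  using gr[unfolded is_grading_def] by (rule conjunct2[THEN conjunct2])

lemma sub1: "VS.subspace (G 1)" and sub2: "VS.subspace (G 2)" and sub3: "VS.subspace (G 3)"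
  and subN1: "G 1 \<subseteq> nspace n" and subN2: "G 2 \<subseteq> nspace n" and subN3: "G 3 \<subseteq> nspace n"
  using grP1 by simp_all

lemma ex_dec: assumes "v \<in> nspace n"
  obtains v1 v2 v3 where "v1 \<in> G 1" "v2 \<in> G 2" "v3 \<in> G 3" "v = v1 + v2 + v3"
proof -
  from grP2 assms have "\<exists>t. fst t \<in> G 1 \<and> fst (snd t) \<in> G 2 \<and> snd (snd t) \<in> G 3
                          \<and> v = fst t + fst (snd t) + snd (snd t)" by (meson ex1_implies_ex)
  then obtain t where "fst t \<in> G 1" "fst (snd t) \<in> G 2" "snd (snd t) \<in> G 3"
      "v = fst t + fst (snd t) + snd (snd t)" by blast
  then show ?thesis using that by blast
qed

lemma uniq:
  assumes "v1 \<in> G 1" "v2 \<in> G 2" "v3 \<in> G 3" "w1 \<in> G 1" "w2 \<in> G 2" "w3 \<in> G 3"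
    and eq: "v1 + v2 + v3 = w1 + w2 + w3"
  shows "v1 = w1 \<and> v2 = w2 \<and> v3 = w3"
proof -
  have vN: "v1 + v2 + v3 \<in> nspace n" using assms subN1 subN2 subN3 by blast
  from grP2 vN have "\<exists>!t. fst t \<in> G 1 \<and> fst (snd t) \<in> G 2 \<and> snd (snd t) \<in> G 3
                          \<and> v1 + v2 + v3 = fst t + fst (snd t) + snd (snd t)"
    by blast
  then have "(v1, v2, v3) = (w1, w2, w3)"
    using assms by (metis fst_conv snd_conv)
  then show ?thesis by simp
qed

lemma br: assumes "i \<in> {1,2,3}" "j \<in> {1,2,3}" "x \<in> G i" "y \<in> G j"
  shows "lie n x y \<in> (if i + j \<le> 3 then G (i + j) else {0})"
  using grP3 assms by blast

lemma br11: "x \<in> G 1 \<Longrightarrow> y \<in> G 1 \<Longrightarrow> lie n x y \<in> G 2"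
  using br[of 1 1 x y] by (simp add: eval_nat_numeral)
lemma br12: "x \<in> G 1 \<Longrightarrow> y \<in> G 2 \<Longrightarrow> lie n x y \<in> G 3"
  using br[of 1 2 x y] by (simp add: eval_nat_numeral)
lemma br21: "x \<in> G 2 \<Longrightarrow> y \<in> G 1 \<Longrightarrow> lie n x y \<in> G 3"
  using br[of 2 1 x y] by (simp add: eval_nat_numeral)
lemma br13: "x \<in> G 1 \<Longrightarrow> y \<in> G 3 \<Longrightarrow> lie n x y = 0"
  using br[of 1 3 x y] by (simp add: eval_nat_numeral)
lemma br31: "x \<in> G 3 \<Longrightarrow> y \<in> G 1 \<Longrightarrow> lie n x y = 0"
  using br[of 3 1 x y] by (simp add: eval_nat_numeral)
lemma br22: "x \<in> G 2 \<Longrightarrow> y \<in> G 2 \<Longrightarrow> lie n x y = 0"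
  using br[of 2 2 x y] by (simp add: eval_nat_numeral)
lemma br23: "x \<in> G 2 \<Longrightarrow> y \<in> G 3 \<Longrightarrow> lie n x y = 0"
  using br[of 2 3 x y] by (simp add: eval_nat_numeral)
lemma br32: "x \<in> G 3 \<Longrightarrow> y \<in> G 2 \<Longrightarrow> lie n x y = 0"
  using br[of 3 2 x y] by (simp add: eval_nat_numeral)
lemma br33: "x \<in> G 3 \<Longrightarrow> y \<in> G 3 \<Longrightarrow> lie n x y = 0"
  using br[of 3 3 x y] by (simp add: eval_nat_numeral)

lemma zero_in: "0 \<in> G 1" "0 \<in> G 2" "0 \<in> G 3"
  using VS.subspace_0 sub1 sub2 sub3 by auto

lemma G23: "x \<in> G 2 \<Longrightarrow> x \<in> G 3 \<Longrightarrow> x = 0"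
  using uniq[of 0 x 0 0 0 x] zero_in by simp

definition AA :: "(nb \<Rightarrow> 'k) set" where "AA = {x + y | x y. x \<in> G 2 \<and> y \<in> G 3}"

lemma subAA: "VS.subspace AA" unfolding AA_def by (rule VS.subspace_sums[OF sub2 sub3])
lemma AA_N: "AA \<subseteq> nspace n" unfolding AA_def using subN2 subN3 by blast

lemma G1AA: "x \<in> G 1 \<Longrightarrow> x \<in> AA \<Longrightarrow> x = 0"
proof -
  assume x: "x \<in> G 1" "x \<in> AA"
  then obtain a b where ab: "a \<in> G 2" "b \<in> G 3" "x = a + b" unfolding AA_def by blast
  have "x + 0 + 0 = 0 + a + b" using ab by simp
  then show "x = 0" using uniq[of x 0 0 0 a b] x ab zero_in by blast
qed

lemma dec1: assumes "v \<in> nspace n"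
  obtains v1 a where "v1 \<in> G 1" "a \<in> AA" "v = v1 + a"
proof -
  obtain v1 v2 v3 where "v1 \<in> G 1" "v2 \<in> G 2" "v3 \<in> G 3" "v = v1 + v2 + v3"
    using ex_dec[OF assms] .
  then show ?thesis using that[of v1 "v2 + v3"] unfolding AA_def by (auto simp: add.assoc)
qed

lemma G2_AA: "x \<in> G 2 \<Longrightarrow> x \<in> AA"
  unfolding AA_def by (rule CollectI, rule exI[of _ x], rule exI[of _ 0]) (simp add: zero_in)
lemma G3_AA: "x \<in> G 3 \<Longrightarrow> x \<in> AA"
  unfolding AA_def by (rule CollectI, rule exI[of _ 0], rule exI[of _ x]) (simp add: zero_in)

lemma lie_A_right: assumes v: "v \<in> nspace n" and w: "w \<in> AA"
  shows "lie n v w \<in> G 3"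
proof -
  obtain v1 v2 v3 where v': "v1 \<in> G 1" "v2 \<in> G 2" "v3 \<in> G 3" "v = v1 + v2 + v3"
    using ex_dec[OF v] .
  obtain w2 w3 where w': "w2 \<in> G 2" "w3 \<in> G 3" "w = w2 + w3" using w unfolding AA_def by blast
  have "lie n v w = lie n v1 w2 + lie n v1 w3 + lie n v2 w2 + lie n v2 w3 + lie n v3 w2 + lie n v3 w3"
    unfolding v'(4) w'(3) by (simp add: lie_add_left lie_add_right algebra_simps)
  also have "\<dots> = lie n v1 w2"
    using br13[OF v'(1) w'(2)] br22[OF v'(2) w'(1)] br23[OF v'(2) w'(2)] br32[OF v'(3) w'(1)]
      br33[OF v'(3) w'(2)] by simp
  finally show ?thesis using br12[OF v'(1) w'(1)] by simp
qed

lemma lie_A_left: assumes "w \<in> AA" "v \<in> nspace n"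
  shows "lie n w v \<in> G 3"
  using lie_A_right[OF assms(2,1)] lie_antisym[of n w v] VS.subspace_neg[OF sub3] by simp

lemma AA_abel: assumes "v \<in> AA" "w \<in> AA" shows "lie n v w = 0"
proof -
  obtain v2 v3 where v': "v2 \<in> G 2" "v3 \<in> G 3" "v = v2 + v3" using assms(1) unfolding AA_def by blast
  obtain w2 w3 where w': "w2 \<in> G 2" "w3 \<in> G 3" "w = w2 + w3" using assms(2) unfolding AA_def by blast
  show ?thesis unfolding v'(3) w'(3)
    using br22[OF v'(1) w'(1)] br23[OF v'(1) w'(2)] br32[OF v'(2) w'(1)] br33[OF v'(2) w'(2)]
    by (simp add: lie_add_left lie_add_right)
qed

lemma lie_in_AA: assumes "v \<in> nspace n" "w \<in> nspace n" shows "lie n v w \<in> AA"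
proof -
  obtain v1 a where v': "v1 \<in> G 1" "a \<in> AA" "v = v1 + a" using dec1[OF assms(1)] .
  obtain w1 b where w': "w1 \<in> G 1" "b \<in> AA" "w = w1 + b" using dec1[OF assms(2)] .
  have v1N: "v1 \<in> nspace n" "w1 \<in> nspace n" using v'(1) w'(1) subN1 by auto
  have "lie n v w = lie n v1 w1 + (lie n v1 b + lie n a w1) + lie n a b"
    unfolding v'(3) w'(3) by (simp add: lie_add_left lie_add_right algebra_simps)
  also have "\<dots> = lie n v1 w1 + (lie n v1 b + lie n a w1)" using AA_abel[OF v'(2) w'(2)] by simp
  finally show ?thesis
    using br11[OF v'(1) w'(1)] lie_A_right[OF v1N(1) w'(2)] lie_A_left[OF v'(2) v1N(2)]
      VS.subspace_add[OF sub3] unfolding AA_def by blast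
qed

lemma G3_central: assumes "v \<in> G 3" "w \<in> nspace n" shows "lie n v w = 0"
proof -
  obtain w1 w2 w3 where w': "w1 \<in> G 1" "w2 \<in> G 2" "w3 \<in> G 3" "w = w1 + w2 + w3"
    using ex_dec[OF assms(2)] .
  show ?thesis unfolding w'(4)
    using br31[OF assms(1) w'(1)] br32[OF assms(1) w'(2)] br33[OF assms(1) w'(3)]
    by (simp add: lie_add_right)
qed

lemma key_pair:
  assumes P: "P = p1 + pa" and Q: "Q = q1 + qa" and p1: "p1 \<in> G 1" and q1: "q1 \<in> G 1"
    and pa: "pa \<in> AA" and qa: "qa \<in> AA" and PQ: "lie n P Q \<in> G 3"
  shows "lie n P Q = lie n P qa + lie n pa Q"
proof -
  have PN: "P \<in> nspace n" "Q \<in> nspace n" using P Q p1 q1 pa qa subN1 AA_N by blast+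
  have e: "lie n P Q = lie n p1 q1 + (lie n P qa + lie n pa Q)"
    unfolding P Q using AA_abel[OF pa qa] by (simp add: lie_add_left lie_add_right algebra_simps)
  have "lie n p1 q1 = lie n P Q - (lie n P qa + lie n pa Q)" using e by (simp add: algebra_simps)
  moreover have "lie n P Q - (lie n P qa + lie n pa Q) \<in> G 3"
    using PQ lie_A_right[OF PN(1) qa] lie_A_left[OF pa PN(2)]
      VS.subspace_add[OF sub3] VS.subspace_diff[OF sub3] by blast
  ultimately have "lie n p1 q1 \<in> G 3" by simp
  then have "lie n p1 q1 = 0" using G23 br11[OF p1 q1] by blast
  then show ?thesis using e by simp
qed

end

context grad begin

abbreviation dl :: "nb \<Rightarrow> (nb \<Rightarrow> 'k)" where "dl \<equiv> delta"

lemma dlN: "k \<in> nbasis n \<Longrightarrow> dl k \<in> nspace n" by (rule nspace_delta)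

lemma dl_brackets:
  "lie n (dl A) (dl Bb) = dl C" "lie n (dl A) (dl C) = dl H" "lie n (dl Bb) (dl U) = dl H"
  "lie n (dl Bb) (dl Y) = dl H" "lie n (dl X) (dl Y) = dl H" "lie n (dl A) (dl Y) = dl F"
  "lie n (dl X) (dl U) = dl F" "lie n (dl U) (dl Y) = 0"
  by (simp_all add: lie_delta bb_def zero_fun_def)

lemma dl_brackets2: assumes "1 \<le> i" "i \<le> n"
  shows "lie n (dl (E i)) (dl U) = dl (Us i)" "lie n (dl (E i)) (dl Y) = dl (Ys i)"
    "lie n (dl (E i)) (dl X) = dl (Xs i)"
  using assms by (simp_all add: lie_delta bb_def)

lemma dl_bracketEW: assumes "1 \<le> i" "i < j" "j \<le> n"
  shows "lie n (dl (E i)) (dl (E j)) = dl (EW i j)"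
  using assms by (simp add: lie_delta bb_def)

lemma dC_AA: "dl C \<in> AA"
  using lie_in_AA[OF dlN dlN, of A Bb] dl_brackets(1) by simp

lemma dH_G3: "dl H \<in> G 3"
  using lie_A_right[OF dlN[of A] dC_AA] dl_brackets(2) by simp

lemma AA_coord: assumes w: "w \<in> AA" shows "w A = 0" "w Bb = 0"
proof -
  have wN: "w \<in> nspace n" using w AA_N by blast
  have "lie n w (dl C) = 0" by (rule AA_abel[OF w dC_AA])
  then have "lie n w (dl C) H = 0" by simp
  then show wA: "w A = 0" by (simp add: lie_H delta_def)
  have m: "lie n (dl A) w \<in> G 3" by (rule lie_A_right[OF dlN w]) simp
  have "lie n (lie n (dl A) w) (dl A) = 0" by (rule G3_central[OF m dlN]) simp
  then have "lie n (lie n (dl A) w) (dl A) H = 0" by simp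
  then have "lie n (dl A) w C = 0" by (simp add: lie_H delta_def)
  then show "w Bb = 0" using wA by (simp add: lie_C delta_def)
qed

lemma deltas_high:
  assumes k: "k \<in> nbasis n" "\<forall>i. k \<noteq> E i" "k \<notin> {A, Bb, X, U, Y}"
  shows "dl k \<in> AA"
proof (cases k)
  case (EW i j)
  then have "1 \<le> i" "i < j" "j \<le> n" using k by auto
  then show ?thesis using EW dl_bracketEW lie_in_AA[OF dlN dlN, of "E i" "E j"] by simp
next
  case (Xs i)
  then have "1 \<le> i" "i \<le> n" using k by auto
  then show ?thesis using Xs dl_brackets2 lie_in_AA[OF dlN dlN, of "E i" X] by simp
next
  case (Us i)
  then have "1 \<le> i" "i \<le> n" using k by auto
  then show ?thesis using Us dl_brackets2 lie_in_AA[OF dlN dlN, of "E i" U] by simp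
next
  case (Ys i)
  then have "1 \<le> i" "i \<le> n" using k by auto
  then show ?thesis using Ys dl_brackets2 lie_in_AA[OF dlN dlN, of "E i" Y] by simp
next
  case C then show ?thesis using dC_AA by simp
next
  case F then show ?thesis using dl_brackets lie_in_AA[OF dlN dlN, of A Y] by simp
next
  case H then show ?thesis using dl_brackets lie_in_AA[OF dlN dlN, of A C] by simp
qed (use k in auto)

lemma low_zero_in_AA:
  assumes v: "v \<in> nspace n" and z: "\<And>i. 1 \<le> i \<Longrightarrow> i \<le> n \<Longrightarrow> v (E i) = 0"
    "v A = 0" "v Bb = 0" "v X = 0" "v U = 0" "v Y = 0"
  shows "v \<in> AA"
proof (rule in_subspace_deltas[OF subAA v])
  fix k assume k: "k \<in> nbasis n" "v k \<noteq> 0"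
  have "\<forall>i. k \<noteq> E i" using k z by (auto simp: nbasis_def)
  moreover have "k \<notin> {A, Bb, X, U, Y}" using k z by auto
  ultimately show "delta k \<in> AA" using deltas_high k(1) by blast
qed


lemma fcoord: "f = g + h \<Longrightarrow> f k = g k + (h k :: 'k)" by simp

lemma UY_AA: "dl U \<in> AA \<and> dl Y \<in> AA"
proof -
  obtain b1 bb where b: "b1 \<in> G 1" "bb \<in> AA" "dl Bb = b1 + bb" using dec1[OF dlN[of Bb]] by auto
  obtain u1 ub where u: "u1 \<in> G 1" "ub \<in> AA" "dl U = u1 + ub" using dec1[OF dlN[of U]] by auto
  obtain x1 xb where x: "x1 \<in> G 1" "xb \<in> AA" "dl X = x1 + xb" using dec1[OF dlN[of X]] by auto
  obtain y1 yb where y: "y1 \<in> G 1" "yb \<in> AA" "dl Y = y1 + yb" using dec1[OF dlN[of Y]] by auto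
  note bc = AA_coord[OF b(2)] and uc = AA_coord[OF u(2)] and xc = AA_coord[OF x(2)] and yc = AA_coord[OF y(2)]
  have e1: "dl H = lie n (dl Bb) ub + lie n bb (dl U)"
    using key_pair[OF b(3) u(3) b(1) u(1) b(2) u(2)] dl_brackets dH_G3 by simp
  have bX: "bb X = 0" using fcoord[OF e1, of F] by (simp add: lie_F delta_def)
  have e2: "dl H = lie n (dl Bb) yb + lie n bb (dl Y)"
    using key_pair[OF b(3) y(3) b(1) y(1) b(2) y(2)] dl_brackets dH_G3 by simp
  have yUY: "yb U + yb Y = 1" using fcoord[OF e2, of H] bX bc by (simp add: lie_H delta_def)
  have e3: "dl H = lie n (dl X) yb + lie n xb (dl Y)"
    using key_pair[OF x(3) y(3) x(1) y(1) x(2) y(2)] dl_brackets dH_G3 by simp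
  have yU: "yb U = 0" using fcoord[OF e3, of F] xc by (simp add: lie_F delta_def)
  have yY: "yb Y = 1" using yUY yU by simp
  have xX: "xb X = 0" using fcoord[OF e3, of H] xc yY by (simp add: lie_H delta_def)
  have yE: "yb (E i) = 0" if "1 \<le> i" "i \<le> n" for i
    using fcoord[OF e3, of "Xs i"] that by (simp add: lie_Xs delta_def)
  have e4: "0 = lie n (dl U) yb + lie n ub (dl Y)"
    using key_pair[OF u(3) y(3) u(1) y(1) u(2) y(2)] dl_brackets zero_in by simp
  have yX: "yb X = 0" using fcoord[OF e4, of F] uc by (simp add: lie_F delta_def)
  have uX: "ub X = 0" using fcoord[OF e4, of H] uc yc by (simp add: lie_H delta_def)
  have uE: "ub (E i) = 0" if "1 \<le> i" "i \<le> n" for i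
    using fcoord[OF e4, of "Ys i"] that by (simp add: lie_Ys delta_def)
  have y1eq: "y1 = dl Y - yb" using y(3) by simp
  have "dl Y - yb \<in> AA"
    by (rule low_zero_in_AA) (use yE yc yX yU yY dlN[of Y] y(2) AA_N in \<open>auto simp: delta_def\<close>)
  then have "y1 = 0" using G1AA[OF y(1)] y1eq by simp
  then have YA: "dl Y \<in> AA" using y by simp
  have FG3: "dl F \<in> G 3" using lie_A_right[OF dlN[of A] YA] dl_brackets by simp
  have e5: "dl F = lie n (dl X) ub + lie n xb (dl U)"
    using key_pair[OF x(3) u(3) x(1) u(1) x(2) u(2)] dl_brackets FG3 by simp
  have uU: "ub U = 1" using fcoord[OF e5, of F] xX by (simp add: lie_F delta_def)
  have uY: "ub Y = 0" using fcoord[OF e5, of H] xc by (simp add: lie_H delta_def)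
  have u1eq: "u1 = dl U - ub" using u(3) by simp
  have "dl U - ub \<in> AA"
    by (rule low_zero_in_AA) (use uE uc uX uU uY dlN[of U] u(2) AA_N in \<open>auto simp: delta_def\<close>)
  then have "u1 = 0" using G1AA[OF u(1)] u1eq by simp
  then have "dl U \<in> AA" using u by simp
  with YA show ?thesis by simp
qed

end

definition K1 :: "nat \<Rightarrow> nb set" where "K1 n = E ` {1..n} \<union> {A, Bb, X}"
definition K3 :: "nat \<Rightarrow> nb set" where "K3 n = Us ` {1..n} \<union> Ys ` {1..n} \<union> {F, H}"
definition KE :: "nat \<Rightarrow> nb set" where "KE n = {EW i j | i j. 1 \<le> i \<and> i < j \<and> j \<le> n} \<union> Xs ` {1..n}"

lemma K1_sub: "K1 n \<subseteq> nbasis n" by (auto simp: K1_def)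
lemma K3_sub: "K3 n \<subseteq> nbasis n" by (auto simp: K3_def)
lemma KE_sub: "KE n \<subseteq> nbasis n" by (auto simp: KE_def)

lemma nbasis_split: "k \<in> nbasis n \<Longrightarrow> k \<in> K1 n \<or> k \<in> {C, U, Y} \<or> k \<in> K3 n \<or> k \<in> KE n"
  by (auto simp: nbasis_def K1_def K3_def KE_def)

lemma KE_K3: "k \<in> KE n \<Longrightarrow> k \<notin> K3 n" by (auto simp: KE_def K3_def)

lemma card_pairs: "card {(i, j). 1 \<le> i \<and> i < j \<and> j \<le> (n::nat)} = n * (n - 1) div 2"
proof (induction n)
  case 0
  have "{(i, j). 1 \<le> i \<and> i < j \<and> j \<le> (0::nat)} = {}" by auto
  show ?case by (subst \<open>_ = {}\<close>) simp
next
  case (Suc n)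
  have eq: "{(i, j). 1 \<le> i \<and> i < j \<and> j \<le> Suc n} = {(i, j). 1 \<le> i \<and> i < j \<and> j \<le> n} \<union> (\<lambda>i. (i, Suc n)) ` {1..n}"
    by auto
  have fin: "finite {(i, j). 1 \<le> i \<and> i < j \<and> j \<le> (n::nat)}"
    by (rule finite_subset[of _ "{1..n} \<times> {1..n}"]) auto
  have "card {(i, j). 1 \<le> i \<and> i < j \<and> j \<le> Suc n} = n * (n - 1) div 2 + n"
    unfolding eq using Suc fin by (subst card_Un_disjoint) (auto simp: card_image inj_on_def)
  also have "\<dots> = Suc n * (Suc n - 1) div 2"
  proof -
    have "Suc n * n = n * (n - 1) + 2 * n" by (cases n) (auto simp: algebra_simps)
    then show ?thesis by simp
  qed
  finally show ?case .
qed

lemma card_EW: "card {EW i j | i j. 1 \<le> i \<and> i < j \<and> j \<le> n} = n * (n - 1) div 2"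
proof -
  have eq: "{EW i j | i j. 1 \<le> i \<and> i < j \<and> j \<le> n} = (\<lambda>(i,j). EW i j) ` {(i, j). 1 \<le> i \<and> i < j \<and> j \<le> n}"
    by auto
  have "card ((\<lambda>(i,j). EW i j) ` {(i, j). 1 \<le> i \<and> i < j \<and> j \<le> n}) = card {(i, j). 1 \<le> i \<and> i < j \<and> j \<le> n}"
    by (rule card_image) (auto simp: inj_on_def)
  then show ?thesis unfolding eq card_pairs .
qed

lemma card_K1: "card (K1 n) = n + 3"
proof -
  have "card (E ` {1..n}) = n" by (simp add: card_image inj_on_def)
  then show ?thesis unfolding K1_def by (subst card_Un_disjoint) auto
qed

lemma card_K3: "card (K3 n) = 2 * n + 2"
proof -
  have "card (Us ` {1..n}) = n" "card (Ys ` {1..n}) = n" by (simp_all add: card_image inj_on_def)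
  then show ?thesis unfolding K3_def
    by (subst card_Un_disjoint; auto)+
qed

lemma card_nbasis: "card (nbasis n) = n * (n - 1) div 2 + 4 * n + 8"
proof -
  have c: "card (E ` {1..n}) = n" "card (Us ` {1..n}) = n" "card (Ys ` {1..n}) = n" "card (Xs ` {1..n}) = n"
    by (simp_all add: card_image inj_on_def)
  have fe: "finite {EW i j | i j. 1 \<le> i \<and> i < j \<and> j \<le> n}"
    using finite_nbasis[of n] by (rule finite_subset[rotated]) (auto simp: nbasis_def)
  let ?S1 = "E ` {1..n}" and ?S8 = "{A, Bb, X, U, Y, C, F, H}"
    and ?EW = "{EW i j | i j. 1 \<le> i \<and> i < j \<and> j \<le> n}"
    and ?SX = "Xs ` {1..n}" and ?SU = "Us ` {1..n}" and ?SY = "Ys ` {1..n}"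
  have f: "finite ?S1" "finite ?S8" "finite ?EW" "finite ?SX" "finite ?SU" "finite ?SY" using fe by auto
  have d1: "?S1 \<inter> ?S8 = {}" by auto
  have d2: "(?S1 \<union> ?S8) \<inter> ?EW = {}" by auto
  have d3: "(?S1 \<union> ?S8 \<union> ?EW) \<inter> ?SX = {}" by auto
  have d4: "(?S1 \<union> ?S8 \<union> ?EW \<union> ?SX) \<inter> ?SU = {}" by auto
  have d5: "(?S1 \<union> ?S8 \<union> ?EW \<union> ?SX \<union> ?SU) \<inter> ?SY = {}" by auto
  have c8: "card ?S8 = 8" by simp
  have c5: "card (?S1 \<union> ?S8 \<union> ?EW \<union> ?SX \<union> ?SU \<union> ?SY) = n + 8 + n * (n - 1) div 2 + n + n + n"
    using f d1 d2 d3 d4 d5 c c8 card_EW[of n]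
    by (simp only: card_Un_disjoint finite_UnI)
  then show ?thesis unfolding nbasis_def by simp
qed


context grad begin

abbreviation F2 where "F2 \<equiv> (FK n (nbasis n - K1 n) :: (nb \<Rightarrow> 'k) set)"
abbreviation F3 where "F3 \<equiv> (FK n (K3 n) :: (nb \<Rightarrow> 'k) set)"

lemma F2_mem: "v \<in> F2 \<longleftrightarrow> v \<in> nspace n \<and> (\<forall>k\<in>K1 n. v k = 0)"
  using K1_sub[of n] by (auto simp: FK_def)

lemma AA_F2: "AA = F2"
proof
  show "AA \<subseteq> F2"
  proof
    fix w assume w: "w \<in> AA"
    have wN: "w \<in> nspace n" using w AA_N by blast
    have l: "lie n w (dl U) = 0" using AA_abel[OF w] UY_AA by blast
    have "w (E i) = 0" if "1 \<le> i" "i \<le> n" for i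
      using fun_cong[OF l, of "Us i"] that by (simp add: lie_Us delta_def)
    moreover have "w X = 0" using fun_cong[OF l, of F] by (simp add: lie_F delta_def)
    ultimately show "w \<in> F2" unfolding F2_mem using AA_coord[OF w] wN by (auto simp: K1_def)
  qed
next
  show "F2 \<subseteq> AA"
  proof
    fix v assume v: "v \<in> F2"
    show "v \<in> AA"
    proof (rule in_subspace_deltas[OF subAA])
      show "v \<in> nspace n" using v F2_mem by blast
      fix k assume k: "k \<in> nbasis n" "v k \<noteq> 0"
      then have "k \<notin> K1 n" using v F2_mem by blast
      then have k2: "\<forall>i. k \<noteq> E i" "k \<notin> {A, Bb, X}" using k(1) by (auto simp: K1_def)
      show "delta k \<in> AA"
      proof (cases "k \<in> {U, Y}")
        case True then show ?thesis using UY_AA by auto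
      next
        case False then show ?thesis using deltas_high[OF k(1)] k2 by auto
      qed
    qed
  qed
qed

lemma L_F3: assumes w: "w \<in> F2"
  shows "lie n v w \<in> F3" "lie n w v \<in> F3"
proof -
  have wz: "w (E i) = 0" if "1 \<le> i" "i \<le> n" for i using w that unfolding F2_mem by (auto simp: K1_def)
  have wz2: "w A = 0" "w Bb = 0" "w X = 0" using w unfolding F2_mem by (auto simp: K1_def)
  have "lie n v w k = 0 \<and> lie n w v k = 0" if k: "k \<in> nbasis n" "k \<notin> K3 n" for k
  proof (cases k)
    case (EW i j)
    then have "1 \<le> i" "i < j" "j \<le> n" using k by auto
    then show ?thesis using EW wz[of i] wz[of j] by (simp add: lie_EW)
  next
    case (Xs i)
    then have "1 \<le> i" "i \<le> n" using k by auto
    then show ?thesis using Xs wz[of i] wz2 by (simp add: lie_Xs)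
  next
    case C then show ?thesis using wz2 by (simp add: lie_C)
  qed (use k in \<open>auto simp: lie_zero K3_def\<close>)
  then show "lie n v w \<in> F3" "lie n w v \<in> F3" by (auto simp: FK_def)
qed

lemma F3_G3: "F3 \<subseteq> G 3"
proof
  fix v assume v: "v \<in> F3"
  show "v \<in> G 3"
  proof (rule in_subspace_deltas[OF sub3])
    show "v \<in> nspace n" using v by (simp add: FK_def)
    fix k assume k: "k \<in> nbasis n" "v k \<noteq> 0"
    then have "k \<in> K3 n" using v by (auto simp: FK_def)
    then consider i where "1 \<le> i" "i \<le> n" "k = Us i" | i where "1 \<le> i" "i \<le> n" "k = Ys i"
      | "k = F" | "k = H" by (auto simp: K3_def)
    then show "delta k \<in> G 3"
    proof cases
      case 1
      have "lie n (dl (E i)) (dl U) \<in> G 3" by (rule lie_A_right[OF dlN]) (use 1 UY_AA in auto)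
      then show ?thesis using dl_brackets2 1 by simp
    next
      case 2
      have "lie n (dl (E i)) (dl Y) \<in> G 3" by (rule lie_A_right[OF dlN]) (use 2 UY_AA in auto)
      then show ?thesis using dl_brackets2 2 by simp
    next
      case 3
      have "lie n (dl A) (dl Y) \<in> G 3" by (rule lie_A_right[OF dlN]) (use UY_AA in auto)
      then show ?thesis using dl_brackets 3 by simp
    next
      case 4 then show ?thesis using dH_G3 by simp
    qed
  qed
qed

lemma split2: assumes "P \<in> nspace n" "Q \<in> nspace n"
  shows "\<exists>p\<in>G 2. \<exists>t\<in>F3. lie n P Q = p + t"
proof -
  obtain p1 pa where p: "p1 \<in> G 1" "pa \<in> AA" "P = p1 + pa" using dec1[OF assms(1)] by auto
  obtain q1 qa where q: "q1 \<in> G 1" "qa \<in> AA" "Q = q1 + qa" using dec1[OF assms(2)] by auto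
  have e: "lie n P Q = lie n p1 q1 + (lie n p1 qa + lie n pa Q)"
    unfolding p(3) q(3) by (simp add: lie_add_left lie_add_right algebra_simps)
  have "lie n p1 qa + lie n pa Q \<in> F3"
    using L_F3[of qa p1] L_F3[of pa Q] p(2) q(2) AA_F2 VS.subspace_add[OF subspace_FK] by blast
  then show ?thesis using e br11[OF p(1) q(1)] by blast
qed


lemma dK3: "k \<in> K3 n \<Longrightarrow> dl k \<in> F3"
  using K3_sub[of n] by (auto simp: FK_def delta_def nspace_def)

lemma K1_K3: "k \<in> K1 n \<Longrightarrow> k \<notin> K3 n" by (auto simp: K1_def K3_def)

lemma G3_F3: "G 3 \<subseteq> F3"
proof
  fix v assume v3: "v \<in> G 3"
  have vN: "v \<in> nspace n" using v3 subN3 by blast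
  have vF2: "v \<in> F2" using G3_AA[OF v3] AA_F2 by simp
  have vK1: "\<forall>k\<in>K1 n. v k = 0" using vF2 F2_mem by blast
  have cA: "lie n v (dl A) = 0" by (rule G3_central[OF v3 dlN]) simp
  have cB: "lie n v (dl Bb) = 0" by (rule G3_central[OF v3 dlN]) simp
  have vA: "v A = 0" "v Bb = 0" "v X = 0" using vK1 by (auto simp: K1_def)
  have vC: "v C = 0" using fun_cong[OF cA, of H] vA by (simp add: lie_H delta_def)
  have vY: "v Y = 0" using fun_cong[OF cA, of F] vA by (simp add: lie_F delta_def)
  have vU: "v U = 0" using fun_cong[OF cB, of H] vY vA by (simp add: lie_H delta_def)
  define t where "t = (\<Sum>k\<in>K3 n. sc (v k) (dl k))"
  have fK3: "finite (K3 n)" using finite_nbasis K3_sub finite_subset by blast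
  have tF3: "t \<in> F3" unfolding t_def
    by (rule VS.subspace_sum[OF subspace_FK], rule VS.subspace_scale[OF subspace_FK], rule dK3)
  have tk: "t k = (if k \<in> K3 n then v k else 0)" for k
  proof -
    have "t k = (\<Sum>k'\<in>K3 n. if k = k' then v k' else 0)"
      unfolding t_def sum_fun_apply by (rule sum.cong) (auto simp: delta_def)
    also have "\<dots> = (if k \<in> K3 n then v k else 0)" by (rule sum.delta'[OF fK3])
    finally show ?thesis .
  qed
  define z where "z = v - t"
  have z3: "z \<in> G 3" using v3 F3_G3 tF3 VS.subspace_diff[OF sub3] unfolding z_def by blast
  have zN: "z \<in> nspace n" using z3 subN3 by blast
  have zk: "z k = 0" if "k \<notin> KE n" for k
  proof (cases "k \<in> nbasis n")
    case True
    then consider "k \<in> K1 n" | "k \<in> {C, U, Y}" | "k \<in> K3 n" | "k \<in> KE n" using nbasis_split by blast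
    then show ?thesis
    proof cases
      case 1 then show ?thesis using vK1 K1_K3 tk by (simp add: z_def)
    next
      case 2 then have "k \<notin> K3 n" by (auto simp: K3_def)
      then show ?thesis using 2 vC vU vY tk by (auto simp: z_def)
    next
      case 3 then show ?thesis using tk by (simp add: z_def)
    qed (use that in auto)
  next
    case False then show ?thesis using zN by (simp add: nspace_def)
  qed
  have ex: "\<forall>k\<in>KE n. \<exists>pt. fst pt \<in> G 2 \<and> snd pt \<in> F3 \<and> dl k = fst pt + snd pt"
  proof
    fix k assume k: "k \<in> KE n"
    then consider i j where "1 \<le> i" "i < j" "j \<le> n" "k = EW i j" | i where "1 \<le> i" "i \<le> n" "k = Xs i"
      by (auto simp: KE_def)
    then have "\<exists>p\<in>G 2. \<exists>t\<in>F3. dl k = p + t"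
    proof cases
      case 1
      then show ?thesis using split2[OF dlN dlN, of "E i" "E j"] dl_bracketEW[OF 1(1-3)] by simp
    next
      case 2
      then show ?thesis using split2[OF dlN dlN, of "E i" X] dl_brackets2[OF 2(1-2)] by simp
    qed
    then show "\<exists>pt. fst pt \<in> G 2 \<and> snd pt \<in> F3 \<and> dl k = fst pt + snd pt" by force
  qed
  then obtain PT where PT: "\<forall>k\<in>KE n. fst (PT k) \<in> G 2 \<and> snd (PT k) \<in> F3 \<and> dl k = fst (PT k) + snd (PT k)"
    using bchoice[OF ex] by blast
  define P' where "P' k = (if k \<in> KE n then fst (PT k) else 0)" for k
  define T' where "T' k = (if k \<in> KE n then snd (PT k) else 0)" for k
  have P'2: "P' k \<in> G 2" for k using PT zero_in by (auto simp: P'_def)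
  have T'3: "T' k \<in> F3" for k using PT VS.subspace_0[OF subspace_FK] by (auto simp: T'_def)
  have spl: "sc (z k) (dl k) = sc (z k) (P' k) + sc (z k) (T' k)" for k
  proof (cases "k \<in> KE n")
    case True
    then have "dl k = P' k + T' k" using PT by (simp add: P'_def T'_def)
    then show ?thesis by (simp add: VS.scale_right_distrib)
  next
    case False then show ?thesis using zk by (simp add: zero_fun_def fun_eq_iff)
  qed
  define s2 where "s2 = (\<Sum>k\<in>nbasis n. sc (z k) (P' k))"
  define s3 where "s3 = (\<Sum>k\<in>nbasis n. sc (z k) (T' k))"
  have "z = (\<Sum>k\<in>nbasis n. sc (z k) (dl k))" by (rule expand[OF zN])
  also have "\<dots> = (\<Sum>k\<in>nbasis n. sc (z k) (P' k) + sc (z k) (T' k))" by (rule sum.cong) (simp_all add: spl)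
  also have "\<dots> = s2 + s3" unfolding s2_def s3_def by (rule sum.distrib)
  finally have zs: "z = s2 + s3" .
  have s22: "s2 \<in> G 2" unfolding s2_def
    by (rule VS.subspace_sum[OF sub2], rule VS.subspace_scale[OF sub2], rule P'2)
  have s33: "s3 \<in> F3" unfolding s3_def
    by (rule VS.subspace_sum[OF subspace_FK], rule VS.subspace_scale[OF subspace_FK], rule T'3)
  have "s2 = z - s3" using zs by simp
  then have "s2 \<in> G 3" using VS.subspace_diff[OF sub3 z3] F3_G3 s33 by blast
  then have "s2 = 0" using G23 s22 by blast
  then have zF3: "z \<in> F3" using zs s33 by simp
  have "v k = 0" if k: "k \<in> nbasis n" "k \<notin> K3 n" for k
  proof -
    consider "k \<in> K1 n" | "k \<in> {C, U, Y}" | "k \<in> KE n" using nbasis_split[OF k(1)] k(2) by blast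
    then show ?thesis
    proof cases
      case 1 then show ?thesis using vK1 by blast
    next
      case 2 then show ?thesis using vC vU vY by auto
    next
      case 3
      have "z k = 0" using zF3 k by (simp add: FK_def)
      moreover have "v = z + t" by (simp add: z_def)
      ultimately show ?thesis using tk k(2) by simp
    qed
  qed
  then show "v \<in> F3" using vN by (simp add: FK_def)
qed

lemma dims: "VS.dim (G 1) = n + 3" "VS.dim (G 2) = n * (n + 1) div 2 + 3" "VS.dim (G 3) = 2 * n + 2"
proof -
  have G3eq: "G 3 = F3" using F3_G3 G3_F3 by blast
  show d3: "VS.dim (G 3) = 2 * n + 2" using dim_FK[OF K3_sub, of n] card_K3[of n] G3eq by simp
  have N: "(nspace n :: (nb \<Rightarrow> 'k) set) = {x + y | x y. x \<in> G 1 \<and> y \<in> AA}"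
  proof
    show "nspace n \<subseteq> {x + y | x y. x \<in> G 1 \<and> y \<in> AA}"
    proof
      fix v :: "nb \<Rightarrow> 'k" assume "v \<in> nspace n"
      then obtain v1 a where "v1 \<in> G 1" "a \<in> AA" "v = v1 + a" using dec1 by blast
      then show "v \<in> {x + y | x y. x \<in> G 1 \<and> y \<in> AA}" by blast
    qed
    show "{x + y | x y. x \<in> G 1 \<and> y \<in> AA} \<subseteq> nspace n" using subN1 AA_N by blast
  qed
  have I1: "G 1 \<inter> AA \<subseteq> {0}" using G1AA by blast
  have dN: "VS.dim (nspace n :: (nb \<Rightarrow> 'k) set) = VS.dim (G 1) + VS.dim AA"
    using dim_direct[OF sub1 subAA subN1 AA_N I1] N by simp
  have dN2: "VS.dim (nspace n :: (nb \<Rightarrow> 'k) set) = card (nbasis n)"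
    by (subst nspace_FK) (rule dim_FK[OF subset_refl])
  have dAA: "VS.dim AA = card (nbasis n - K1 n)"
    using AA_F2 dim_FK[of "nbasis n - K1 n" n] by simp
  have fK1: "finite (K1 n)" using finite_nbasis K1_sub finite_subset by blast
  have cD: "card (nbasis n - K1 n) = card (nbasis n) - card (K1 n)"
    by (rule card_Diff_subset[OF fK1 K1_sub])
  have cle: "card (K1 n) \<le> card (nbasis n)" by (rule card_mono[OF finite_nbasis K1_sub])
  show d1: "VS.dim (G 1) = n + 3" using dN dN2 dAA cD cle card_K1[of n] by linarith
  have I2: "G 2 \<inter> G 3 \<subseteq> {0}" using G23 by blast
  have dA2: "VS.dim AA = VS.dim (G 2) + VS.dim (G 3)"
    unfolding AA_def by (rule dim_direct[OF sub2 sub3 subN2 subN3 I2])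
  have ar: "n * (n + 1) div 2 = n * (n - 1) div 2 + n"
  proof -
    have "n * (n + 1) = n * (n - 1) + 2 * n" by (cases n) (auto simp: algebra_simps)
    then show ?thesis by simp
  qed
  show "VS.dim (G 2) = n * (n + 1) div 2 + 3"
    using dA2 d3 dAA cD card_K1[of n] card_nbasis[of n] ar cle by linarith
qed

end

lemma uniq3:
  fixes a b c :: "'k::field_char_0"
  assumes "a + b + c = 0" "a + 2 * b + 3 * c = 0" "a + 4 * b + 9 * c = 0"
  shows "a = 0 \<and> b = 0 \<and> c = 0"
proof -
  have e: "2 * c = 2 * (a + b + c) - 3 * (a + 2 * b + 3 * c) + (a + 4 * b + 9 * c)"
    by (simp add: algebra_simps)
  have "2 * c = 0" using e unfolding assms by simp
  then have c: "c = 0" by simp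
  have e2: "b + 2 * c = (a + 2 * b + 3 * c) - (a + b + c)" by (simp add: algebra_simps)
  have "b + 2 * c = 0" using e2 unfolding assms by simp
  then have b: "b = 0" using c by simp
  then show ?thesis using assms c by simp
qed

context
  fixes n :: nat and D :: "(nb \<Rightarrow> 'k::field_char_0) \<Rightarrow> (nb \<Rightarrow> 'k)"
  assumes der: "is_derivation n D" and dg: "diagonalizable n D" and ev: "eigvals n D = {1, 2, 3}"
begin

lemma DN: "v \<in> nspace n \<Longrightarrow> D v \<in> nspace n" using der by (simp add: is_derivation_def)
lemma Dadd: "v \<in> nspace n \<Longrightarrow> w \<in> nspace n \<Longrightarrow> D (v + w) = D v + D w"
  using der by (simp add: is_derivation_def)
lemma Dsc: "v \<in> nspace n \<Longrightarrow> D (sc c v) = sc c (D v)"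
  using der by (simp add: is_derivation_def)
lemma Dlie: "v \<in> nspace n \<Longrightarrow> w \<in> nspace n \<Longrightarrow> D (lie n v w) = lie n (D v) w + lie n v (D w)"
  using der by (simp add: is_derivation_def)
lemma D0: "D 0 = 0"
proof -
  have "D (0 + 0) = D 0 + D 0" by (rule Dadd) simp_all
  then show ?thesis by simp
qed

lemma sub_eig: "VS.subspace (eigsp n D l)"
  unfolding VS.subspace_def
proof (intro conjI ballI allI)
  have "sc l (0::nb \<Rightarrow> 'k) = 0" by (simp add: sc_def fun_eq_iff)
  then show "0 \<in> eigsp n D l" by (simp add: eigsp_def D0)
  fix x y assume x: "x \<in> eigsp n D l" and y: "y \<in> eigsp n D l"
  then show "x + y \<in> eigsp n D l"
    by (auto simp: eigsp_def Dadd sc_def fun_eq_iff algebra_simps)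
next
  fix c x assume x: "x \<in> eigsp n D l"
  then have xN: "x \<in> nspace n" and Dx: "D x = sc l x" by (auto simp: eigsp_def)
  have "D (sc c x) = sc c (sc l x)" using Dsc[OF xN] Dx by simp
  also have "\<dots> = sc l (sc c x)" by (simp add: sc_def fun_eq_iff algebra_simps)
  finally show "sc c x \<in> eigsp n D l" using xN by (auto simp: eigsp_def)
qed

lemma eig_N: "eigsp n D l \<subseteq> nspace n" by (auto simp: eigsp_def)

abbreviation GD :: "nat \<Rightarrow> (nb \<Rightarrow> 'k) set" where "GD i \<equiv> eigsp n D (of_nat i)"

lemma GD_uniq:
  assumes x: "x1 \<in> GD 1" "x2 \<in> GD 2" "x3 \<in> GD 3" and y: "y1 \<in> GD 1" "y2 \<in> GD 2" "y3 \<in> GD 3"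
    and eq: "x1 + x2 + x3 = y1 + y2 + y3"
  shows "x1 = y1 \<and> x2 = y2 \<and> x3 = y3"
proof -
  define d1 where "d1 = x1 - y1"
  define d2 where "d2 = x2 - y2"
  define d3 where "d3 = x3 - y3"
  have d: "d1 \<in> GD 1" "d2 \<in> GD 2" "d3 \<in> GD 3"
    unfolding d1_def d2_def d3_def using x y VS.subspace_diff[OF sub_eig] by blast+
  have dN: "d1 \<in> nspace n" "d2 \<in> nspace n" "d3 \<in> nspace n" using d eig_N by blast+
  have Dd: "D d1 = sc 1 d1" "D d2 = sc 2 d2" "D d3 = sc 3 d3" using d by (simp_all add: eigsp_def)
  have s0: "d1 + d2 + d3 = 0" using eq unfolding d1_def d2_def d3_def by (simp add: algebra_simps)
  have e1: "D (d1 + d2 + d3) = sc 1 d1 + sc 2 d2 + sc 3 d3"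
    using dN Dd by (simp add: Dadd nspace_add)
  then have s1: "sc 1 d1 + sc 2 d2 + sc 3 d3 = 0" using s0 D0 by simp
  have sN: "sc 1 d1 \<in> nspace n" "sc 2 d2 \<in> nspace n" "sc 3 d3 \<in> nspace n" using dN by auto
  have "D (sc 1 d1 + sc 2 d2 + sc 3 d3) = sc 1 (sc 1 d1) + sc 2 (sc 2 d2) + sc 3 (sc 3 d3)"
    using sN dN Dd by (simp add: Dadd nspace_add Dsc)
  then have s2: "sc 1 (sc 1 d1) + sc 2 (sc 2 d2) + sc 3 (sc 3 d3) = 0" using s1 D0 by simp
  have "d1 k = 0 \<and> d2 k = 0 \<and> d3 k = 0" for k
  proof (rule uniq3)
    show "d1 k + d2 k + d3 k = 0" using fun_cong[OF s0, of k] by simp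
    show "d1 k + 2 * d2 k + 3 * d3 k = 0" using fun_cong[OF s1, of k] by simp
    show "d1 k + 4 * d2 k + 9 * d3 k = 0" using fun_cong[OF s2, of k] by (simp add: algebra_simps)
  qed
  then have "d1 = 0" "d2 = 0" "d3 = 0" by (auto simp: fun_eq_iff)
  then show ?thesis unfolding d1_def d2_def d3_def by simp
qed

lemma deriv_grading: "is_grading n GD"
  unfolding is_grading_def
proof (intro conjI ballI)
  fix i :: nat assume "i \<in> {1,2,3}"
  show "VS.subspace (GD i)" using sub_eig by blast
next
  fix i :: nat assume "i \<in> {1,2,3}"
  show "GD i \<subseteq> nspace n" using eig_N by blast
next
  fix v :: "nb \<Rightarrow> 'k" assume v: "v \<in> nspace n"
  obtain B where B: "B \<subseteq> nspace n" "\<not> VS.dependent B" "VS.span B = nspace n"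
      "\<forall>b\<in>B. \<exists>l. D b = sc l b"
    using dg unfolding diagonalizable_def by blast
  have BG: "B \<subseteq> GD 1 \<union> (GD 2 \<union> GD 3)"
  proof
    fix b assume b: "b \<in> B"
    then obtain l where l: "D b = sc l b" using B(4) by blast
    have "b \<noteq> 0" using b B(2) VS.dependent_zero by blast
    then have "l \<in> eigvals n D" using l b B(1) unfolding eigvals_def by blast
    then have "l = of_nat 1 \<or> l = of_nat 2 \<or> l = of_nat 3" using ev by simp
    then show "b \<in> GD 1 \<union> (GD 2 \<union> GD 3)" using l b B(1) by (auto simp: eigsp_def)
  qed
  have sp: "VS.span (GD 1 \<union> (GD 2 \<union> GD 3)) = {x + y | x y. x \<in> GD 1 \<and> y \<in> {x + y | x y. x \<in> GD 2 \<and> y \<in> GD 3}}"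
  proof -
    have "VS.span (eigsp n D l) = eigsp n D l" for l using sub_eig VS.span_eq_iff by blast
    then show ?thesis by (simp only: VS.span_Un)
  qed
  have "v \<in> VS.span (GD 1 \<union> (GD 2 \<union> GD 3))" using v B(3) VS.span_mono[OF BG] by blast
  then obtain x1 x2 x3 where xs: "x1 \<in> GD 1" "x2 \<in> GD 2" "x3 \<in> GD 3" "v = x1 + (x2 + x3)"
    unfolding sp by blast
  define P where "P t \<longleftrightarrow> fst t \<in> GD 1 \<and> fst (snd t) \<in> GD 2 \<and> snd (snd t) \<in> GD 3
                          \<and> v = fst t + fst (snd t) + snd (snd t)" for t :: "(nb \<Rightarrow> 'k) \<times> (nb \<Rightarrow> 'k) \<times> (nb \<Rightarrow> 'k)"
  have P0: "P (x1, x2, x3)" unfolding P_def using xs(1-3) xs(4)[unfolded add.assoc[symmetric]] by simp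
  have P1: "t = (x1, x2, x3)" if "P t" for t
  proof -
    obtain t1 t2 t3 where tt: "t = (t1, t2, t3)" by (cases t) auto
    have h: "t1 \<in> GD 1" "t2 \<in> GD 2" "t3 \<in> GD 3" "v = t1 + t2 + t3"
      using that unfolding P_def tt by simp_all
    have "t1 + t2 + t3 = x1 + x2 + x3" using h(4) xs(4) by (simp add: add.assoc)
    then have "t1 = x1 \<and> t2 = x2 \<and> t3 = x3" using GD_uniq[OF h(1-3) xs(1-3)] by blast
    then show ?thesis using tt by simp
  qed
  have "\<exists>!t. P t" using P0 P1 by (rule ex1I)
  then show "\<exists>!t. fst t \<in> GD 1 \<and> fst (snd t) \<in> GD 2 \<and> snd (snd t) \<in> GD 3
                          \<and> v = fst t + fst (snd t) + snd (snd t)" unfolding P_def .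
next
  fix i j :: nat and x y assume i: "i \<in> {1,2,3}" and j: "j \<in> {1,2,3}" and x: "x \<in> GD i" and y: "y \<in> GD j"
  have xN: "x \<in> nspace n" and yN: "y \<in> nspace n" using x y eig_N by blast+
  have "D (lie n x y) = lie n (sc (of_nat i) x) y + lie n x (sc (of_nat j) y)"
    using Dlie[OF xN yN] x y by (simp add: eigsp_def)
  then have Dl: "D (lie n x y) = sc (of_nat (i + j)) (lie n x y)"
    by (simp add: lie_sc_left lie_sc_right fun_eq_iff algebra_simps)
  show "lie n x y \<in> (if i + j \<le> 3 then GD (i + j) else {0})"
  proof (cases "i + j \<le> 3")
    case True then show ?thesis using Dl nspace_lie by (simp add: eigsp_def)
  next
    case False
    have "lie n x y = 0"
    proof (rule ccontr)
      assume "lie n x y \<noteq> 0"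
      then have "of_nat (i + j) \<in> eigvals n D" using Dl nspace_lie unfolding eigvals_def by blast
      then have "(of_nat (i + j) :: 'k) = of_nat 1 \<or> (of_nat (i + j) :: 'k) = of_nat 2 \<or> (of_nat (i + j) :: 'k) = of_nat 3"
        using ev by simp
      then have "i + j = 1 \<or> i + j = 2 \<or> i + j = 3" by (simp only: of_nat_eq_iff)
      then show False using False by auto
    qed
    then show ?thesis using False by simp
  qed
qed

end

theorem mainTheorem5:
  fixes n :: nat
  assumes "n \<ge> 1"
  shows "(\<forall>D :: (nb \<Rightarrow> 'k::field_char_0) \<Rightarrow> (nb \<Rightarrow> 'k).
            is_derivation n D \<and> diagonalizable n D \<and> eigvals n D = {1, 2, 3} \<longrightarrow>
              ndim (eigsp n D 1) = n + 3
            \<and> ndim (eigsp n D 2) = n * (n + 1) div 2 + 3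
            \<and> ndim (eigsp n D 3) = 2 * n + 2)
       \<and> (\<forall>G :: nat \<Rightarrow> (nb \<Rightarrow> 'k) set. is_grading n G \<longrightarrow>
              ndim (G 1) = n + 3
            \<and> ndim (G 2) = n * (n + 1) div 2 + 3
            \<and> ndim (G 3) = 2 * n + 2)"
proof (rule conjI; intro allI impI)
  fix D :: "(nb \<Rightarrow> 'k) \<Rightarrow> (nb \<Rightarrow> 'k)"
  assume h: "is_derivation n D \<and> diagonalizable n D \<and> eigvals n D = {1, 2, 3}"
  then have g: "grad n (\<lambda>i. eigsp n D (of_nat i))"
    unfolding grad_def using deriv_grading by blast
  show "ndim (eigsp n D 1) = n + 3 \<and> ndim (eigsp n D 2) = n * (n + 1) div 2 + 3
            \<and> ndim (eigsp n D 3) = 2 * n + 2"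
    using grad.dims[OF g] by simp
next
  fix G :: "nat \<Rightarrow> (nb \<Rightarrow> 'k) set"
  assume "is_grading n G"
  then have g: "grad n G" unfolding grad_def .
  show "ndim (G 1) = n + 3 \<and> ndim (G 2) = n * (n + 1) div 2 + 3 \<and> ndim (G 3) = 2 * n + 2"
    using grad.dims[OF g] by simp
qed


end
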